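(* Let $G$ be a graph and $k\ge1$. Then $M_k(G)$ is a trivial matroid if and only if $G$ has no subgraph $F$ such that $F$ is a cacti-graph and $\Delta F=k$.
   Context: Graphs are finite, may have loops and parallel edges, and have no isolated vertices. A leaf is a vertex incident to exactly one edge, which is not a loop. $\Delta H=|E(H)|-|V(H)|$. A cacti-graph is a graph with no isolated vertices, no leaves, and no component that is a cycle. For $X\subseteq E(G)$, $G\langle X\rangle$ is the subgraph with edge set $X$ and vertex set the vertices incident to $X$. For $k\ge0$, $M_k(G)$ is the matroid on $E(G)$ whose circuits are the inclusion-minimal members of $\{C\subseteq E(G):C\neq\emptyset,\ |C|=|V(G\langle C\rangle)|+k\}$. A matroid on $E$ is trivial if $E$ is a base or a cobase (equivalently it has no circuit or no cocircuit), and non-trivial otherwise. *)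

theory Defs
  imports Main
begin

text \<open>A graph (loops and parallel edges allowed, no isolated vertices) is given by a
  finite edge set E and an incidence map ends, assigning to each edge its set of
  one (loop) or two end vertices. Vertices are exactly the vertices incident to edges.\<close>

definition is_graph :: "'e set \<Rightarrow> ('e \<Rightarrow> 'v set) \<Rightarrow> bool" where
  "is_graph E ends \<longleftrightarrow> finite E \<and> (\<forall>e\<in>E. card (ends e) = 1 \<or> card (ends e) = 2)"

definition verts :: "('e \<Rightarrow> 'v set) \<Rightarrow> 'e set \<Rightarrow> 'v set" where
  "verts ends X = (\<Union>e\<in>X. ends e)"

definition Delta :: "('e \<Rightarrow> 'v set) \<Rightarrow> 'e set \<Rightarrow> int" where
  "Delta ends X = int (card X) - int (card (verts ends X))"

definition is_leaf :: "('e \<Rightarrow> 'v set) \<Rightarrow> 'e set \<Rightarrow> 'v \<Rightarrow> bool" where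
  "is_leaf ends X v \<longleftrightarrow> (\<exists>e. {f\<in>X. v \<in> ends f} = {e} \<and> card (ends e) = 2)"

definition degree :: "('e \<Rightarrow> 'v set) \<Rightarrow> 'e set \<Rightarrow> 'v \<Rightarrow> nat" where
  "degree ends X v = (\<Sum>e\<in>{f\<in>X. v \<in> ends f}. if card (ends e) = 1 then 2 else 1)"

definition adj :: "('e \<Rightarrow> 'v set) \<Rightarrow> 'e set \<Rightarrow> 'v \<Rightarrow> 'v \<Rightarrow> bool" where
  "adj ends X u w \<longleftrightarrow> (\<exists>e\<in>X. u \<in> ends e \<and> w \<in> ends e)"

definition connected_edges :: "('e \<Rightarrow> 'v set) \<Rightarrow> 'e set \<Rightarrow> bool" where
  "connected_edges ends X \<longleftrightarrow>
     (\<forall>u\<in>verts ends X. \<forall>w\<in>verts ends X. (adj ends X)\<^sup>*\<^sup>* u w)"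

definition component :: "('e \<Rightarrow> 'v set) \<Rightarrow> 'e set \<Rightarrow> 'v \<Rightarrow> 'e set" where
  "component ends X v = {e\<in>X. \<exists>u\<in>ends e. (adj ends X)\<^sup>*\<^sup>* v u}"

definition is_cycle :: "('e \<Rightarrow> 'v set) \<Rightarrow> 'e set \<Rightarrow> bool" where
  "is_cycle ends Y \<longleftrightarrow> Y \<noteq> {} \<and> connected_edges ends Y \<and>
     (\<forall>u\<in>verts ends Y. degree ends Y u = 2)"

text \<open>G<X> is a cacti-graph (it has no isolated vertices by construction).\<close>
definition is_cacti :: "('e \<Rightarrow> 'v set) \<Rightarrow> 'e set \<Rightarrow> bool" where
  "is_cacti ends X \<longleftrightarrow> (\<forall>v\<in>verts ends X. \<not> is_leaf ends X v) \<and>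
     (\<forall>v\<in>verts ends X. \<not> is_cycle ends (component ends X v))"

definition Mk_circuit :: "'e set \<Rightarrow> ('e \<Rightarrow> 'v set) \<Rightarrow> nat \<Rightarrow> 'e set \<Rightarrow> bool" where
  "Mk_circuit E ends k C \<longleftrightarrow>
     C \<subseteq> E \<and> C \<noteq> {} \<and> card C = card (verts ends C) + k \<and>
     (\<forall>D. D \<subset> C \<longrightarrow> \<not> (D \<noteq> {} \<and> card D = card (verts ends D) + k))"

definition Mk_indep :: "'e set \<Rightarrow> ('e \<Rightarrow> 'v set) \<Rightarrow> nat \<Rightarrow> 'e set \<Rightarrow> bool" where
  "Mk_indep E ends k I \<longleftrightarrow> I \<subseteq> E \<and> (\<forall>C. Mk_circuit E ends k C \<longrightarrow> \<not> C \<subseteq> I)"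

definition Mk_base :: "'e set \<Rightarrow> ('e \<Rightarrow> 'v set) \<Rightarrow> nat \<Rightarrow> 'e set \<Rightarrow> bool" where
  "Mk_base E ends k B \<longleftrightarrow> Mk_indep E ends k B \<and>
     (\<forall>I. Mk_indep E ends k I \<longrightarrow> B \<subseteq> I \<longrightarrow> I = B)"

text \<open>Trivial: E is a base or a cobase (i.e. E - E = {} is a base).\<close>
definition Mk_trivial :: "'e set \<Rightarrow> ('e \<Rightarrow> 'v set) \<Rightarrow> nat \<Rightarrow> bool" where
  "Mk_trivial E ends k \<longleftrightarrow> Mk_base E ends k E \<or> Mk_base E ends k (E - E)"

end

theory Submission
  imports Defs
begin

lemma fin_ends: "is_graph E ends \<Longrightarrow> e \<in> E \<Longrightarrow> finite (ends e)"
proof -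
  assume g: "is_graph E ends" and e: "e \<in> E"
  have "card (ends e) = 1 \<or> card (ends e) = 2" using g e unfolding is_graph_def by blast
  hence "card (ends e) \<noteq> 0" by linarith
  thus ?thesis by (meson card.infinite)
qed

lemma fin_verts: "is_graph E ends \<Longrightarrow> X \<subseteq> E \<Longrightarrow> finite (verts ends X)"
proof -
  assume g: "is_graph E ends" and X: "X \<subseteq> E"
  have "finite X" using g X unfolding is_graph_def using finite_subset by blast
  moreover have "\<forall>e\<in>X. finite (ends e)" using fin_ends[OF g] X by blast
  ultimately show ?thesis unfolding verts_def by blast
qed

lemma fin_X: "is_graph E ends \<Longrightarrow> X \<subseteq> E \<Longrightarrow> finite X"
  unfolding is_graph_def using finite_subset by blast

lemma verts_mono: "X \<subseteq> Y \<Longrightarrow> verts ends X \<subseteq> verts ends Y"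
  unfolding verts_def by blast

lemma handshake:
  assumes g: "is_graph E ends" and XE: "Y \<subseteq> E"
  shows "(\<Sum>v\<in>verts ends Y. degree ends Y v) = 2 * card Y"
proof -
  let ?w = "\<lambda>e. (if card (ends e) = 1 then 2 else 1::nat)"
  have fY: "finite Y" using fin_X[OF g XE] .
  have fV: "finite (verts ends Y)" using fin_verts[OF g XE] .
  have d: "degree ends Y v = (\<Sum>e\<in>Y. if v \<in> ends e then ?w e else 0)" for v
    unfolding degree_def using fY sum.inter_filter[OF fY, of "\<lambda>e. ?w e" "\<lambda>f. v \<in> ends f"] by simp
  have "(\<Sum>v\<in>verts ends Y. degree ends Y v)
        = (\<Sum>e\<in>Y. \<Sum>v\<in>verts ends Y. if v \<in> ends e then ?w e else 0)"
    unfolding d by (rule sum.swap)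
  also have "\<dots> = (\<Sum>e\<in>Y. ?w e * card (ends e))"
  proof (rule sum.cong[OF refl])
    fix e assume eY: "e \<in> Y"
    have "{v\<in>verts ends Y. v \<in> ends e} = ends e"
      using eY unfolding verts_def by blast
    hence "(\<Sum>v\<in>verts ends Y. if v \<in> ends e then ?w e else 0) = (\<Sum>v\<in>ends e. ?w e)"
      using sum.inter_filter[OF fV, of "\<lambda>v. ?w e" "\<lambda>v. v \<in> ends e"] by simp
    thus "(\<Sum>v\<in>verts ends Y. if v \<in> ends e then ?w e else 0) = ?w e * card (ends e)"
      by simp
  qed
  also have "\<dots> = (\<Sum>e\<in>Y. 2)"
  proof (rule sum.cong[OF refl])
    fix e assume "e \<in> Y"
    hence "card (ends e) = 1 \<or> card (ends e) = 2" using g XE unfolding is_graph_def by blast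
    thus "?w e * card (ends e) = 2" by (elim disjE) simp_all
  qed
  also have "\<dots> = 2 * card Y" by simp
  finally show ?thesis .
qed

lemma key:
  assumes g: "is_graph E ends" and k: "k \<ge> 1" and XE: "X \<subseteq> E"
    and D: "Delta ends X \<ge> int k"
    and mn: "\<forall>Y. Y \<subseteq> E \<and> Delta ends Y \<ge> int k \<longrightarrow> card X \<le> card Y"
  shows "Delta ends X = int k \<and> is_cacti ends X"
proof -
  have fX: "finite X" using fin_X[OF g XE] .
  have fV: "finite (verts ends X)" using fin_verts[OF g XE] .
  have rem: "Delta ends (X - {e}) < int k" if "e \<in> X" for e
  proof (rule ccontr)
    assume "\<not> ?thesis"
    hence "card X \<le> card (X - {e})" using mn XE by (meson Diff_subset order.trans not_less)
    moreover have "card X > 0" using that fX card_gt_0_iff by blast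
    ultimately show False using that fX by (simp add: card_Diff_singleton)
  qed
  have cardrem: "card (X - {e}) = card X - 1" "card X \<ge> 1" if "e \<in> X" for e
    using that fX card_Diff_singleton apply auto
    using card_0_eq fX that by fastforce
  have Xne: "X \<noteq> {}"
  proof
    assume "X = {}" thus False using D k by (simp add: Delta_def verts_def)
  qed
  have eq: "Delta ends X = int k"
  proof -
    obtain e where e: "e \<in> X" using Xne by blast
    have "card (verts ends (X - {e})) \<le> card (verts ends X)"
      by (rule card_mono[OF fV verts_mono]) auto
    hence "Delta ends (X - {e}) \<ge> Delta ends X - 1"
      using cardrem[OF e] unfolding Delta_def by linarith
    thus ?thesis using rem[OF e] D by linarith
  qed
  have noleaf: "\<not> is_leaf ends X v" if "v \<in> verts ends X" for v
  proof
    assume "is_leaf ends X v"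
    then obtain e where e: "{f\<in>X. v \<in> ends f} = {e}" unfolding is_leaf_def by blast
    hence eX: "e \<in> X" by blast
    have "verts ends (X - {e}) \<subseteq> verts ends X - {v}"
      using e unfolding verts_def by blast
    hence "card (verts ends (X - {e})) \<le> card (verts ends X - {v})"
      using fV by (intro card_mono) auto
    also have "\<dots> = card (verts ends X) - 1" using that fV by simp
    finally have c1: "card (verts ends (X - {e})) \<le> card (verts ends X) - 1" .
    have c2: "card (verts ends X) \<ge> 1" using that fV card_gt_0_iff
      by (metis One_nat_def Suc_leI empty_iff)
    have "Delta ends (X - {e}) \<ge> Delta ends X"
      using cardrem[OF eX] c1 c2 unfolding Delta_def by linarith
    thus False using rem[OF eX] eq by simp
  qed
  have nocyc: "\<not> is_cycle ends (component ends X v)" for v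
  proof
    let ?Y = "component ends X v"
    assume cy: "is_cycle ends ?Y"
    have YX: "?Y \<subseteq> X" unfolding component_def by blast
    have YE: "?Y \<subseteq> E" using YX XE by blast
    have Yne: "?Y \<noteq> {}" using cy unfolding is_cycle_def by blast
    have fY: "finite ?Y" using fX YX finite_subset by blast
    have "(\<Sum>u\<in>verts ends ?Y. degree ends ?Y u) = (\<Sum>u\<in>verts ends ?Y. 2)"
      using cy unfolding is_cycle_def by (intro sum.cong) auto
    hence cY: "card ?Y = card (verts ends ?Y)" using handshake[OF g YE] by simp
    have disj: "verts ends (X - ?Y) = verts ends X - verts ends ?Y"
    proof
      show "verts ends X - verts ends ?Y \<subseteq> verts ends (X - ?Y)"
        unfolding verts_def by blast
      show "verts ends (X - ?Y) \<subseteq> verts ends X - verts ends ?Y"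
      proof
        fix w assume "w \<in> verts ends (X - ?Y)"
        then obtain f where f: "f \<in> X" "f \<notin> ?Y" "w \<in> ends f" unfolding verts_def by blast
        have "w \<notin> verts ends ?Y"
        proof
          assume "w \<in> verts ends ?Y"
          then obtain e where e: "e \<in> ?Y" "w \<in> ends e" unfolding verts_def by blast
          then obtain u where u: "u \<in> ends e" "(adj ends X)\<^sup>*\<^sup>* v u" "e \<in> X"
            unfolding component_def by blast
          have "adj ends X u w" unfolding adj_def using e u by blast
          hence "(adj ends X)\<^sup>*\<^sup>* v w" using u by auto
          hence "f \<in> ?Y" unfolding component_def using f by blast
          thus False using f by blast
        qed
        thus "w \<in> verts ends X - verts ends ?Y" using f unfolding verts_def by blast
      qed
    qed
    have fVY: "finite (verts ends ?Y)" using fin_verts[OF g YE] .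
    have "card (verts ends (X - ?Y)) = card (verts ends X) - card (verts ends ?Y)"
      unfolding disj using card_Diff_subset[OF fVY verts_mono[OF YX]] .
    moreover have "card (X - ?Y) = card X - card ?Y" using card_Diff_subset[OF fY YX] .
    moreover have "card (verts ends ?Y) \<le> card (verts ends X)" using card_mono[OF fV verts_mono[OF YX]] .
    moreover have "card ?Y \<le> card X" using card_mono[OF fX YX] .
    ultimately have "Delta ends (X - ?Y) = Delta ends X" using cY unfolding Delta_def by simp
    moreover have "X - ?Y \<subseteq> E" using XE by blast
    ultimately have "card X \<le> card (X - ?Y)" using mn[rule_format, of "X - ?Y"] eq by simp
    moreover have "card ?Y > 0" using fY Yne by auto
    ultimately show False using \<open>card (X - ?Y) = card X - card ?Y\<close> \<open>card ?Y \<le> card X\<close> by linarith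
  qed
  show ?thesis using eq noleaf nocyc unfolding is_cacti_def by blast
qed

theorem mainTheorem11:
  fixes E :: "'e set" and ends :: "'e \<Rightarrow> 'v set" and k :: nat
  assumes "is_graph E ends" and "k \<ge> 1"
  shows "Mk_trivial E ends k \<longleftrightarrow>
           \<not> (\<exists>X. X \<subseteq> E \<and> is_cacti ends X \<and> Delta ends X = int k)"
proof
  assume T: "Mk_trivial E ends k"
  show "\<not> (\<exists>X. X \<subseteq> E \<and> is_cacti ends X \<and> Delta ends X = int k)"
  proof
    assume "\<exists>X. X \<subseteq> E \<and> is_cacti ends X \<and> Delta ends X = int k"
    then obtain X where X: "X \<subseteq> E" "Delta ends X = int k" by blast
    have fX: "finite X" using fin_X[OF assms(1) X(1)] .
    let ?P = "\<lambda>D. D \<subseteq> X \<and> D \<noteq> {} \<and> card D = card (verts ends D) + k"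
    have Xne: "X \<noteq> {}" using X(2) assms(2) by (auto simp: Delta_def verts_def)
    have PX: "?P X" using X(2) Xne unfolding Delta_def by simp
    obtain C where C: "?P C" "\<forall>D. ?P D \<longrightarrow> card C \<le> card D"
      using ex_has_least_nat[of ?P X card] PX by blast
    have fC: "finite C" using C(1) fX finite_subset by blast
    have circ: "Mk_circuit E ends k C"
      unfolding Mk_circuit_def
    proof (intro conjI allI impI)
      show "C \<subseteq> E" using C(1) X(1) by blast
      show "C \<noteq> {}" "card C = card (verts ends C) + k" using C(1) by auto
    next
      fix D assume "D \<subset> C"
      show "\<not> (D \<noteq> {} \<and> card D = card (verts ends D) + k)"
      proof
        assume DD: "D \<noteq> {} \<and> card D = card (verts ends D) + k"
        have "D \<subseteq> X" using \<open>D \<subset> C\<close> C(1) by blast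
        hence "card C \<le> card D" using C(2) DD by blast
        moreover have "card D < card C" using psubset_card_mono[OF fC \<open>D \<subset> C\<close>] .
        ultimately show False by simp
      qed
    qed
    have notE: "\<not> Mk_base E ends k E"
      using circ C(1) X(1) unfolding Mk_base_def Mk_indep_def by blast
    obtain e where eX: "e \<in> X" using Xne by blast
    have eE: "e \<in> E" using eX X(1) by blast
    have ind: "Mk_indep E ends k {e}"
      unfolding Mk_indep_def
    proof (intro conjI allI impI)
      show "{e} \<subseteq> E" using eE by simp
    next
      fix C' assume c: "Mk_circuit E ends k C'"
      show "\<not> C' \<subseteq> {e}"
      proof
        assume "C' \<subseteq> {e}"
        hence "C' = {e}" using c unfolding Mk_circuit_def by blast
        moreover have "card (ends e) = 1 \<or> card (ends e) = 2" using assms(1) eE unfolding is_graph_def by blast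
        hence "card (ends e) \<ge> 1" by linarith
        ultimately show False using c assms(2) unfolding Mk_circuit_def verts_def by simp
      qed
    qed
    have "\<not> Mk_base E ends k (E - E)"
      using ind unfolding Mk_base_def by auto
    thus False using notE T unfolding Mk_trivial_def by blast
  qed
next
  assume N: "\<not> (\<exists>X. X \<subseteq> E \<and> is_cacti ends X \<and> Delta ends X = int k)"
  have "Mk_indep E ends k E"
    unfolding Mk_indep_def
  proof (intro conjI allI impI)
    fix C assume c: "Mk_circuit E ends k C"
    show "\<not> C \<subseteq> E"
    proof
      assume CE: "C \<subseteq> E"
      let ?P = "\<lambda>Y. Y \<subseteq> E \<and> Delta ends Y \<ge> int k"
      have "?P C" using c CE unfolding Mk_circuit_def Delta_def by simp
      then obtain X where X: "?P X" "\<forall>Y. ?P Y \<longrightarrow> card X \<le> card Y"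
        using ex_has_least_nat[of ?P C card] by blast
      have "Delta ends X = int k \<and> is_cacti ends X"
        using key[OF assms(1) assms(2)] X by blast
      thus False using N X(1) by blast
    qed
  qed simp
  hence "Mk_base E ends k E" unfolding Mk_base_def Mk_indep_def by auto
  thus "Mk_trivial E ends k" unfolding Mk_trivial_def by simp
qed

end
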